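(* Let $\epsilon, b \in \mathbb{C}$ with $\epsilon \neq 0$. Consider the map $\Phi:(x,y)\mapsto(\widetilde x,\widetilde y)$ of $\mathbb{C}^2$ defined implicitly by the system \[ \frac{\widetilde x - x}{\epsilon}=\widetilde x\, y+x\,\widetilde y, \qquad \frac{\widetilde y - y}{\epsilon}= b+x\widetilde x -(2-\epsilon^2b)\, y\widetilde y, \] which is linear in $(\widetilde x,\widetilde y)$ and so defines a rational map (birational). Then $\Phi$ is integrable in the sense that the rational function \[ H(x,y;\epsilon)=\frac{x^2\big((1-\tfrac{1}{2}\epsilon^2b)y^2-\tfrac{1}{4}(1-\epsilon^2b)x^2-\tfrac{1}{2}b\big)}{\big(1+\epsilon(y+x)\big)\big(1+\epsilon(y-x)\big)\big(1-\epsilon(y+x)\big)\big(1-\epsilon(y-x)\big)} \] is an integral of motion of $\Phi$: $H(\widetilde x,\widetilde y;\epsilon)=H(x,y;\epsilon)$ for all $(x,y)$ at which $\Phi$ and both sides are defined.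
   Context: This map is a modification of the Kahan discretization of the planar system $\dot x=2xy$, $\dot y=b+x^2-2y^2$ (whose standard Kahan discretization has coefficient $2$ instead of $2-\epsilon^2 b$ in front of $y\widetilde y$). An integral of motion of a map $\Phi$ is a (nonconstant) function $H$ with $H\circ\Phi=H$. *)

theory Defs
  imports Complex_Main
begin

definition kahan_sys :: "complex \<Rightarrow> complex \<Rightarrow> complex \<Rightarrow> complex \<Rightarrow> complex \<Rightarrow> complex \<Rightarrow> bool" where
  "kahan_sys \<epsilon> b x y xt yt \<longleftrightarrow>
     (xt - x) / \<epsilon> = xt * y + x * yt \<and>
     (yt - y) / \<epsilon> = b + x * xt - (2 - \<epsilon>^2 * b) * y * yt"

definition H_den :: "complex \<Rightarrow> complex \<Rightarrow> complex \<Rightarrow> complex" where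
  "H_den \<epsilon> x y = (1 + \<epsilon> * (y + x)) * (1 + \<epsilon> * (y - x)) * (1 - \<epsilon> * (y + x)) * (1 - \<epsilon> * (y - x))"

definition H :: "complex \<Rightarrow> complex \<Rightarrow> complex \<Rightarrow> complex \<Rightarrow> complex" where
  "H \<epsilon> b x y = x^2 * ((1 - \<epsilon>^2 * b / 2) * y^2 - (1 - \<epsilon>^2 * b) * x^2 / 4 - b / 2) / H_den \<epsilon> x y"

end

theory Submission
  imports Defs
begin

lemma key:
  fixes e b x y X Y :: complex
  assumes E1: "X - x = e*(X*y + x*Y)" and E2: "Y - y = e*(b + x*X - (2 - e^2*b)*y*Y)"
  shows "X^2 * ((1 - e^2 * b / 2) * Y^2 - (1 - e^2 * b) * X^2 / 4 - b / 2) * ((1 + e * (y + x)) * (1 + e * (y - x)) * (1 - e * (y + x)) * (1 - e * (y - x)))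
   = x^2 * ((1 - e^2 * b / 2) * y^2 - (1 - e^2 * b) * x^2 / 4 - b / 2) * ((1 + e * (Y + X)) * (1 + e * (Y - X)) * (1 - e * (Y + X)) * (1 - e * (Y - X)))"
  using E1 E2 by algebra

theorem theorem1:
  fixes \<epsilon> b x y xt yt :: complex
  assumes "\<epsilon> \<noteq> 0"
    and "kahan_sys \<epsilon> b x y xt yt"
    and "\<forall>u v. kahan_sys \<epsilon> b x y u v \<longrightarrow> u = xt \<and> v = yt"
    and "H_den \<epsilon> x y \<noteq> 0"
    and "H_den \<epsilon> xt yt \<noteq> 0"
  shows "H \<epsilon> b xt yt = H \<epsilon> b x y"
proof -
  have E1: "xt - x = \<epsilon>*(xt*y + x*yt)" and E2: "yt - y = \<epsilon>*(b + x*xt - (2 - \<epsilon>^2*b)*y*yt)"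
    using assms(1,2) unfolding kahan_sys_def by (auto simp: field_simps)
  have k: "xt^2 * ((1 - \<epsilon>^2 * b / 2) * yt^2 - (1 - \<epsilon>^2 * b) * xt^2 / 4 - b / 2) * H_den \<epsilon> x y
    = x^2 * ((1 - \<epsilon>^2 * b / 2) * y^2 - (1 - \<epsilon>^2 * b) * x^2 / 4 - b / 2) * H_den \<epsilon> xt yt"
    unfolding H_den_def by (rule key[OF E1 E2])
  show ?thesis unfolding H_def using k assms(4,5)
    by (simp add: divide_eq_eq eq_divide_eq)
qed

end
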